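(* Let $d\in\mathbb{N}$ with $d\ge 2$ and let $\omega\ge 1/d$. Then \[\left\{\boldsymbol{\alpha}\in K_d:\lim_{Q\to\infty}Q^\omega\min_{0<q\le Q}\|q\boldsymbol{\alpha}\|=0\right\}\subseteq E(d-1+d\omega).\]
   Context: For $\boldsymbol{x}\in\mathbb{R}^d$, $|\boldsymbol{x}|=\max_i|x_i|$ and $\|\boldsymbol{x}\|=\min_{\boldsymbol{p}\in\mathbb{Z}^d}|\boldsymbol{x}-\boldsymbol{p}|$; for $x\in\mathbb{R}$, $\|x\|$ is the distance to the nearest integer. $q$ ranges over integers. $K_d$ is the set of $\boldsymbol{\alpha}\in\mathbb{R}^d$ with $1,\alpha_1,\dots,\alpha_d$ linearly independent over $\mathbb{Q}$. For $\boldsymbol{r},\boldsymbol{\alpha}\in\mathbb{R}^d$, $\boldsymbol{r}\boldsymbol{\alpha}$ is the standard inner product. For real $\omega'\ge d$, \[E(\omega')=\left\{\boldsymbol{\alpha}\in K_d:\lim_{R\to\infty}R^{\omega'}\min\{\|\boldsymbol{r}\boldsymbol{\alpha}\|:\boldsymbol{r}\in\mathbb{Z}^d,\ 0<|\boldsymbol{r}|\le R\}=0\right\}.\] *)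

theory Defs
  imports "HOL-Analysis.Analysis"
begin

definition supnorm :: "real ^ 'n::finite \<Rightarrow> real" where
  "supnorm x = Max (range (\<lambda>i. \<bar>x $ i\<bar>))"

definition dist_lattice :: "real ^ 'n::finite \<Rightarrow> real" where
  "dist_lattice x = Inf {supnorm (x - (\<chi> i. of_int (p $ i))) | p :: int ^ 'n. True}"

definition dist_int :: "real \<Rightarrow> real" where
  "dist_int x = Inf {\<bar>x - of_int k\<bar> | k :: int. True}"

definition Kd :: "(real ^ 'n::finite) set" where
  "Kd = {\<alpha>. \<forall>(c0::rat) (c :: 'n \<Rightarrow> rat).
           of_rat c0 + (\<Sum>i\<in>UNIV. of_rat (c i) * \<alpha> $ i) = 0 \<longrightarrow> c0 = 0 \<and> (\<forall>i. c i = 0)}"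

definition int_inner :: "int ^ 'n::finite \<Rightarrow> real ^ 'n \<Rightarrow> real" where
  "int_inner r \<alpha> = (\<Sum>i\<in>UNIV. of_int (r $ i) * \<alpha> $ i)"

definition int_supnorm :: "int ^ 'n::finite \<Rightarrow> int" where
  "int_supnorm r = Max (range (\<lambda>i. \<bar>r $ i\<bar>))"

definition min_simult :: "real ^ 'n::finite \<Rightarrow> real \<Rightarrow> real" where
  "min_simult \<alpha> Q = Min ((\<lambda>q::int. dist_lattice (of_int q *\<^sub>R \<alpha>)) ` {q. 0 < q \<and> real_of_int q \<le> Q})"

definition min_linform :: "real ^ 'n::finite \<Rightarrow> real \<Rightarrow> real" where
  "min_linform \<alpha> R = Min ((\<lambda>r. dist_int (int_inner r \<alpha>)) `
                        {r :: int ^ 'n. 0 < int_supnorm r \<and> real_of_int (int_supnorm r) \<le> R})"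

definition E_set :: "real \<Rightarrow> (real ^ 'n::finite) set" where
  "E_set \<omega>' = {\<alpha> \<in> Kd. ((\<lambda>R. R powr \<omega>' * min_linform \<alpha> R) \<longlongrightarrow> 0) at_top}"

end

theory Submission
  imports Defs
begin

lemma box_eq: "{r :: int ^ 'n::finite. \<forall>i. r $ i \<in> B} = vec_lambda ` (PiE UNIV (\<lambda>_. B))"
proof
  show "{r :: int ^ 'n::finite. \<forall>i. r $ i \<in> B} \<subseteq> vec_lambda ` (PiE UNIV (\<lambda>_. B))"
  proof
    fix r :: "int ^ 'n" assume "r \<in> {r. \<forall>i. r $ i \<in> B}"
    then have "vec_nth r \<in> PiE UNIV (\<lambda>_. B)" by (auto simp: PiE_UNIV_domain)
    then show "r \<in> vec_lambda ` (PiE UNIV (\<lambda>_. B))" by (metis image_eqI vec_nth_inverse)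
  qed
qed auto

lemma box_finite: "finite B \<Longrightarrow> finite {r :: int ^ 'n::finite. \<forall>i. r $ i \<in> B}"
  unfolding box_eq by (intro finite_imageI finite_PiE) auto

lemma box_card: "finite B \<Longrightarrow> card {r :: int ^ 'n::finite. \<forall>i. r $ i \<in> B} = card B ^ CARD('n)"
proof -
  assume "finite B"
  have "inj_on (vec_lambda :: ('n \<Rightarrow> int) \<Rightarrow> int ^ 'n) X" for X
    by (auto simp: inj_on_def vec_lambda_inject)
  then show ?thesis unfolding box_eq by (simp add: card_image card_PiE)
qed

lemma dist_int_nonneg: "dist_int x \<ge> 0"
  unfolding dist_int_def by (rule cInf_greatest) auto

lemma dist_int_le: "dist_int x \<le> \<bar>x - of_int k\<bar>"
  unfolding dist_int_def by (rule cInf_lower) (auto intro: bdd_belowI[where m=0])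

lemma supnorm_ge: "\<bar>x $ i\<bar> \<le> supnorm x"
  unfolding supnorm_def by (rule Max_ge) auto

lemma int_supnorm_ge: "\<bar>r $ i\<bar> \<le> int_supnorm r"
  unfolding int_supnorm_def by (rule Max_ge) auto

lemma int_supnorm_le: "(\<And>i. \<bar>r $ i\<bar> \<le> K) \<Longrightarrow> int_supnorm r \<le> K"
  unfolding int_supnorm_def by (subst Max_le_iff) auto

lemma int_supnorm_pos: "r \<noteq> 0 \<Longrightarrow> int_supnorm r > 0"
proof -
  assume "r \<noteq> 0"
  then obtain i where "r $ i \<noteq> 0" by (metis vec_eq_iff zero_index)
  then show ?thesis using int_supnorm_ge[of r i] by linarith
qed

lemma kstep:
  fixes x1 x2 A :: real and M :: int
  assumes "A > 0" "M \<ge> 1" "\<bar>x1\<bar> \<le> A" "\<bar>x2\<bar> \<le> A"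
    and "min (M - 1) \<lfloor>M * (x1 + A) / (2 * A)\<rfloor> = min (M - 1) \<lfloor>M * (x2 + A) / (2 * A)\<rfloor>"
  shows "\<bar>x1 - x2\<bar> \<le> 2 * A / M"
proof -
  define u1 where "u1 = M * (x1 + A) / (2 * A)"
  define u2 where "u2 = M * (x2 + A) / (2 * A)"
  have u1le: "u1 \<le> M" using assms unfolding u1_def by (simp add: field_simps)
  have u2le: "u2 \<le> M" using assms unfolding u2_def by (simp add: field_simps)
  have "\<bar>u1 - u2\<bar> \<le> 1"
  proof (cases "\<lfloor>u1\<rfloor> < M - 1 \<and> \<lfloor>u2\<rfloor> < M - 1")
    case True
    then have "\<lfloor>u1\<rfloor> = \<lfloor>u2\<rfloor>" using assms(5) unfolding u1_def[symmetric] u2_def[symmetric] by simp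
    then show ?thesis by linarith
  next
    case False
    then have "\<lfloor>u1\<rfloor> \<ge> M - 1 \<and> \<lfloor>u2\<rfloor> \<ge> M - 1"
      using assms(5) unfolding u1_def[symmetric] u2_def[symmetric] by linarith
    then have "u1 \<ge> M - 1" "u2 \<ge> M - 1" by linarith+
    then show ?thesis using u1le u2le by linarith
  qed
  moreover have "u1 - u2 = M * (x1 - x2) / (2 * A)" unfolding u1_def u2_def
    using assms by (simp add: field_simps)
  ultimately have "\<bar>M * (x1 - x2) / (2 * A)\<bar> \<le> 1" by simp
  then have "\<bar>M\<bar> * \<bar>x1 - x2\<bar> \<le> 2 * A" using assms by (simp add: abs_mult divide_le_eq abs_divide)
  then show ?thesis using assms by (simp add: field_simps)
qed

lemma pigeon:
  fixes p :: "int ^ 'n::finite" and \<eta> :: "real ^ 'n" and N q M :: int and \<epsilon> :: real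
  assumes N1: "N \<ge> 1" and q1: "q \<ge> 1" and M1: "M \<ge> 1" and qM: "q * M < (N + 1) ^ CARD('n)"
    and ep: "\<epsilon> > 0" and eta: "\<forall>i. \<bar>\<eta> $ i\<bar> \<le> \<epsilon>"
  shows "\<exists>r. r \<noteq> 0 \<and> (\<forall>i. \<bar>r $ i\<bar> \<le> N) \<and> q dvd (\<Sum>i\<in>UNIV. r $ i * p $ i)
            \<and> \<bar>\<Sum>i\<in>UNIV. of_int (r $ i) * \<eta> $ i\<bar> \<le> 2 * CARD('n) * N * \<epsilon> / M"
proof -
  define S where "S = {r :: int ^ 'n. \<forall>i. r $ i \<in> {0..N}}"
  define A where "A = CARD('n) * N * \<epsilon>"
  define x where "x r = (\<Sum>i\<in>UNIV. of_int (r $ i) * \<eta> $ i)" for r :: "int ^ 'n"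
  define f where "f r = ((\<Sum>i\<in>UNIV. r $ i * p $ i) mod q, min (M - 1) \<lfloor>M * (x r + A) / (2 * A)\<rfloor>)" for r
  have A0: "A > 0" unfolding A_def using N1 ep by simp
  have xA: "\<bar>x r\<bar> \<le> A" if "r \<in> S" for r
  proof -
    have "\<bar>x r\<bar> \<le> (\<Sum>i\<in>UNIV. \<bar>of_int (r $ i) * \<eta> $ i\<bar>)" unfolding x_def by (rule sum_abs)
    also have "\<dots> \<le> (\<Sum>i\<in>(UNIV::'n set). of_int N * \<epsilon>)"
    proof (rule sum_mono)
      fix i :: 'n
      have "\<bar>real_of_int (r $ i)\<bar> \<le> of_int N" using that unfolding S_def by auto
      then show "\<bar>of_int (r $ i) * \<eta> $ i\<bar> \<le> of_int N * \<epsilon>"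
        unfolding abs_mult using eta by (intro mult_mono) auto
    qed
    also have "\<dots> = A" unfolding A_def by simp
    finally show ?thesis .
  qed
  have cardS: "card S = nat (N + 1) ^ CARD('n)" unfolding S_def
    by (subst box_card) auto
  have finS: "finite S" unfolding S_def by (rule box_finite) auto
  have img: "f ` S \<subseteq> {0..<q} \<times> {0..<M}"
  proof
    fix y assume "y \<in> f ` S"
    then obtain r where r: "r \<in> S" "y = f r" by auto
    have "0 \<le> M * (x r + A) / (2 * A)" using xA[OF r(1)] A0 M1 by (intro divide_nonneg_pos mult_nonneg_nonneg) auto
    then have "0 \<le> \<lfloor>M * (x r + A) / (2 * A)\<rfloor>" by simp
    then show "y \<in> {0..<q} \<times> {0..<M}" using r q1 M1 unfolding f_def by auto
  qed
  have "\<not> inj_on f S"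
  proof
    assume "inj_on f S"
    then have "card S \<le> card ({0..<q} \<times> {0..<M})"
      using img by (intro card_inj_on_le) auto
    then have "nat (N + 1) ^ CARD('n) \<le> nat q * nat M" using cardS by (simp add: card_cartesian_product)
    then have "int (nat (N + 1) ^ CARD('n)) \<le> int (nat q * nat M)" by linarith
    then have "(N + 1) ^ CARD('n) \<le> q * M" using N1 q1 M1 by simp
    then show False using qM by simp
  qed
  then obtain r1 r2 where r12: "r1 \<in> S" "r2 \<in> S" "r1 \<noteq> r2" "f r1 = f r2"
    unfolding inj_on_def by blast
  define r where "r = r1 - r2"
  have "r \<noteq> 0" unfolding r_def using r12 by simp
  moreover have "\<forall>i. \<bar>r $ i\<bar> \<le> N"
  proof
    fix i
    have "0 \<le> r1 $ i" "r1 $ i \<le> N" "0 \<le> r2 $ i" "r2 $ i \<le> N" using r12 unfolding S_def by auto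
    then show "\<bar>r $ i\<bar> \<le> N" unfolding r_def by simp
  qed
  moreover have "q dvd (\<Sum>i\<in>UNIV. r $ i * p $ i)"
  proof -
    have "(\<Sum>i\<in>UNIV. r $ i * p $ i) = (\<Sum>i\<in>UNIV. r1 $ i * p $ i) - (\<Sum>i\<in>UNIV. r2 $ i * p $ i)"
      unfolding r_def by (simp add: left_diff_distrib sum_subtractf)
    moreover have "(\<Sum>i\<in>UNIV. r1 $ i * p $ i) mod q = (\<Sum>i\<in>UNIV. r2 $ i * p $ i) mod q"
      using r12(4) unfolding f_def by simp
    ultimately show ?thesis by (simp add: mod_eq_dvd_iff)
  qed
  moreover have "\<bar>\<Sum>i\<in>UNIV. of_int (r $ i) * \<eta> $ i\<bar> \<le> 2 * CARD('n) * N * \<epsilon> / M"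
  proof -
    have "(\<Sum>i\<in>UNIV. of_int (r $ i) * \<eta> $ i) = x r1 - x r2"
      unfolding r_def x_def by (simp add: left_diff_distrib sum_subtractf)
    moreover have "\<bar>x r1 - x r2\<bar> \<le> 2 * A / M"
      using r12(4) A0 M1 xA[OF r12(1)] xA[OF r12(2)] unfolding f_def by (intro kstep) auto
    ultimately show ?thesis unfolding A_def by (simp add: mult.assoc)
  qed
  ultimately show ?thesis by blast
qed

theorem lemma3:
  fixes \<omega> :: real
  assumes "CARD('n::finite) \<ge> 2"
    and "\<omega> \<ge> 1 / real CARD('n)"
  shows "{\<alpha> :: real ^ 'n. \<alpha> \<in> Kd \<and> ((\<lambda>Q. Q powr \<omega> * min_simult \<alpha> Q) \<longlongrightarrow> 0) at_top}
           \<subseteq> E_set (real CARD('n) - 1 + real CARD('n) * \<omega>)"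
proof
  fix \<alpha> :: "real ^ 'n"
  assume "\<alpha> \<in> {\<alpha> :: real ^ 'n. \<alpha> \<in> Kd \<and> ((\<lambda>Q. Q powr \<omega> * min_simult \<alpha> Q) \<longlongrightarrow> 0) at_top}"
  then have K: "\<alpha> \<in> Kd" and lim: "((\<lambda>Q. Q powr \<omega> * min_simult \<alpha> Q) \<longlongrightarrow> 0) at_top" by auto
  define d where "d = CARD('n)"
  define w where "w = real CARD('n) - 1 + real CARD('n) * \<omega>"
  have d2: "d \<ge> 2" using assms(1) unfolding d_def .
  have "real d * \<omega> \<ge> 1" using assms(2) d2 unfolding d_def by (simp add: field_simps)
  then have w0: "w \<ge> 0" unfolding w_def d_def[symmetric] using d2 by simp
  have "((\<lambda>R. R powr w * min_linform \<alpha> R) \<longlongrightarrow> 0) at_top"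
    unfolding tendsto_iff
  proof (intro allI impI)
    fix e :: real assume e0: "e > 0"
    define C where "C = 4 * real d * 2 powr w + 1"
    have C1: "C \<ge> 1" unfolding C_def by simp
    define \<delta> where "\<delta> = e / C"
    have \<delta>0: "\<delta> > 0" unfolding \<delta>_def using e0 C1 by simp
    from lim \<delta>0 have "eventually (\<lambda>Q. dist (Q powr \<omega> * min_simult \<alpha> Q) 0 < \<delta>) at_top"
      unfolding tendsto_iff by blast
    then obtain Q0 where Q0: "\<And>Q. Q \<ge> Q0 \<Longrightarrow> \<bar>Q powr \<omega> * min_simult \<alpha> Q\<bar> < \<delta>"
      unfolding eventually_at_top_linorder dist_real_def by auto
    show "eventually (\<lambda>R. dist (R powr w * min_linform \<alpha> R) 0 < e) at_top"
      unfolding eventually_at_top_linorder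
    proof (intro exI allI impI)
      fix R :: real assume R: "R \<ge> max 2 (Q0 + 1)"
      define N where "N = \<lfloor>R\<rfloor>"
      have N1: "N \<ge> 1" unfolding N_def using R by linarith
      have NR: "real_of_int N \<le> R" "R < real_of_int N + 1" unfolding N_def by linarith+
      have NQ0: "real_of_int N \<ge> Q0" using NR R by linarith
      define Q where "Q = real_of_int N ^ d"
      have NQ: "real_of_int N \<le> Q" unfolding Q_def using N1 d2
        by (metis dual_order.trans le_add_diff_inverse numeral_le_one_iff of_int_1_le_iff power_increasing power_one_right semiring_norm(69) one_le_numeral)
      have "\<bar>Q powr \<omega> * min_simult \<alpha> Q\<bar> < \<delta>" using Q0 NQ NQ0 by simp

      then have "Q powr \<omega> * min_simult \<alpha> Q < \<delta>" by linarith
      have Qpos: "Q > 0" using NQ N1 by linarith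
      have Qp: "Q powr \<omega> > 0" using Qpos by simp
      define \<epsilon> where "\<epsilon> = \<delta> / Q powr \<omega>"
      have ep0: "\<epsilon> > 0" unfolding \<epsilon>_def using \<delta>0 Qp by simp
      have ms: "min_simult \<alpha> Q < \<epsilon>" unfolding \<epsilon>_def using \<open>Q powr \<omega> * min_simult \<alpha> Q < \<delta>\<close> Qp
        by (simp add: pos_less_divide_eq mult.commute)
      define Qset where "Qset = {q::int. 0 < q \<and> real_of_int q \<le> Q}"
      have QNd: "Q = real_of_int (N ^ d)" unfolding Q_def by simp
      have Qset_sub: "Qset \<subseteq> {1..N ^ d}" unfolding Qset_def QNd by auto
      have finQ: "finite Qset" using finite_subset[OF Qset_sub] by simp
      have "1 \<in> Qset" unfolding Qset_def using NQ N1 by simp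
      then have "min_simult \<alpha> Q \<in> (\<lambda>q::int. dist_lattice (of_int q *\<^sub>R \<alpha>)) ` Qset"
        unfolding min_simult_def Qset_def[symmetric] using finQ by (intro Min_in) auto
      then obtain q where qQ: "q \<in> Qset" and qeq: "min_simult \<alpha> Q = dist_lattice (of_int q *\<^sub>R \<alpha>)" by auto
      have q1: "q \<ge> 1" and qN: "q \<le> N ^ d" using qQ Qset_sub by auto
      have "Inf {supnorm (of_int q *\<^sub>R \<alpha> - (\<chi> i. of_int (p $ i))) | p :: int ^ 'n. True} < \<epsilon>"
        using ms qeq unfolding dist_lattice_def by simp
      then obtain z where "z \<in> {supnorm (of_int q *\<^sub>R \<alpha> - (\<chi> i. of_int (p $ i))) | p :: int ^ 'n. True}" "z < \<epsilon>"
        by (metis (mono_tags, lifting) cInf_lessD empty_Collect_eq)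
      then obtain p :: "int ^ 'n" where p: "supnorm (of_int q *\<^sub>R \<alpha> - (\<chi> i. of_int (p $ i))) < \<epsilon>"
        by auto
      define \<eta> where "\<eta> = of_int q *\<^sub>R \<alpha> - (\<chi> i. of_int (p $ i))"
      have eta: "\<forall>i. \<bar>\<eta> $ i\<bar> \<le> \<epsilon>" using p supnorm_ge[of \<eta>] unfolding \<eta>_def
        by (meson less_imp_le order_trans)
      define T where "T = (N + 1) ^ d - 1"
      have "N ^ d < (N + 1) ^ d" using N1 d2 by (intro power_strict_mono) auto
      then have NT: "N ^ d \<le> T" unfolding T_def by simp
      define M where "M = T div q"
      have qT: "q \<le> T" using qN NT by simp
      have M1: "M \<ge> 1" unfolding M_def using qT q1
        by (metis div_self linorder_not_less not_one_le_zero zdiv_mono1 zero_less_one_class.zero_le_one order_trans)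
      have qM: "q * M \<le> T" unfolding M_def using q1
        by (metis add.commute add_le_cancel_left div_mult_mod_eq mult.commute pos_mod_sign zero_less_iff_neq_zero le_add_same_cancel1 order_less_le_trans zero_less_one)
      have TqM: "T < q * (M + 1)" unfolding M_def using q1
        by (metis add.commute distrib_left div_mult_mod_eq mult.commute mult.right_neutral pos_mod_bound add_less_cancel_left zero_less_one order_less_le_trans)
      have "q * M < (N + 1) ^ d" using qM unfolding T_def by simp
      from pigeon[OF N1 q1 M1 this[unfolded d_def] ep0 eta]
      obtain r where r0: "r \<noteq> 0" and rN: "\<forall>i. \<bar>r $ i\<bar> \<le> N" and rdvd: "q dvd (\<Sum>i\<in>UNIV. r $ i * p $ i)"
        and reta: "\<bar>\<Sum>i\<in>UNIV. of_int (r $ i) * \<eta> $ i\<bar> \<le> 2 * CARD('n) * N * \<epsilon> / M" by blast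
      obtain c where c: "(\<Sum>i\<in>UNIV. r $ i * p $ i) = q * c" using rdvd by blast
      have key: "real_of_int q * int_inner r \<alpha> = of_int (\<Sum>i\<in>UNIV. r $ i * p $ i) + (\<Sum>i\<in>UNIV. of_int (r $ i) * \<eta> $ i)"
        unfolding int_inner_def \<eta>_def
        by (simp add: sum_distrib_left sum.distrib[symmetric] algebra_simps)
      have "int_inner r \<alpha> - of_int c = (\<Sum>i\<in>UNIV. of_int (r $ i) * \<eta> $ i) / q"
      proof -
        have "real_of_int (\<Sum>i\<in>UNIV. r $ i * p $ i) = real_of_int q * real_of_int c" using c by simp
        then show ?thesis using key q1 by (simp add: field_simps del: of_int_sum)
      qed
      then have di: "dist_int (int_inner r \<alpha>) \<le> \<bar>\<Sum>i\<in>UNIV. of_int (r $ i) * \<eta> $ i\<bar> / q"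
        using dist_int_le[of "int_inner r \<alpha>" c] q1 by (simp add: abs_divide)
      have Mq: "real_of_int (M * q) * 2 \<ge> Q"
      proof -
        have "q * (M + 1) \<le> M * q * 2" using M1 q1 by (simp add: algebra_simps)
        then have "N ^ d \<le> M * q * 2" using NT TqM by linarith
        then show ?thesis unfolding QNd by linarith
      qed
      have "dist_int (int_inner r \<alpha>) \<le> 2 * real d * N * \<epsilon> / (real_of_int M * q)"
      proof -
        have "dist_int (int_inner r \<alpha>) \<le> (2 * real d * N * \<epsilon> / M) / q"
          using order_trans[OF di divide_right_mono[OF reta]] q1 unfolding d_def by simp
        then show ?thesis by simp
      qed
      also have "\<dots> \<le> 4 * real d * N * \<epsilon> / Q"
      proof -
        have "2 * real d * N * \<epsilon> / (real_of_int M * q) = (2 * real d * N * \<epsilon>) / (real_of_int (M * q))" by simp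
        also have "\<dots> \<le> (2 * real d * N * \<epsilon>) / (Q / 2)"
          using Mq Qpos N1 ep0 by (intro divide_left_mono) (auto simp: mult_pos_pos)
        finally show ?thesis by simp
      qed
      finally have dle: "dist_int (int_inner r \<alpha>) \<le> 4 * real d * N * \<epsilon> / Q" .
      define Lset where "Lset = {r :: int ^ 'n. 0 < int_supnorm r \<and> real_of_int (int_supnorm r) \<le> R}"
      have rL: "r \<in> Lset" unfolding Lset_def using int_supnorm_pos[OF r0] int_supnorm_le[of r N] rN NR by force
      have "Lset \<subseteq> {r. \<forall>i. r $ i \<in> {-N..N}}"
      proof
        fix s assume "s \<in> Lset"
        then have "real_of_int (int_supnorm s) \<le> R" unfolding Lset_def by simp
        then have "int_supnorm s \<le> N" unfolding N_def by (simp add: le_floor_iff)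
        moreover have "\<bar>s $ i\<bar> \<le> int_supnorm s" for i by (rule int_supnorm_ge)
        ultimately have "\<bar>s $ i\<bar> \<le> N" for i by (meson order_trans)
        then show "s \<in> {r. \<forall>i. r $ i \<in> {-N..N}}" by (auto simp: abs_le_iff) (smt (verit))
      qed
      then have finL: "finite Lset" by (rule finite_subset) (rule box_finite, simp)
      have mdef: "min_linform \<alpha> R = Min ((\<lambda>r. dist_int (int_inner r \<alpha>)) ` Lset)"
        unfolding min_linform_def Lset_def ..
      have m_le: "min_linform \<alpha> R \<le> dist_int (int_inner r \<alpha>)" unfolding mdef
        using finL rL by (intro Min_le) auto
      have "min_linform \<alpha> R \<in> (\<lambda>r. dist_int (int_inner r \<alpha>)) ` Lset" unfolding mdef
        using finL rL by (intro Min_in) auto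
      then have m0: "min_linform \<alpha> R \<ge> 0" using dist_int_nonneg by auto
      have Rp: "R > 0" using R by simp
      have Np: "real_of_int N > 0" using N1 by simp
      have pw: "real_of_int N / (Q * Q powr \<omega>) = real_of_int N powr (- w)"
      proof -
        have "Q = real_of_int N powr real d" unfolding Q_def using Np by (simp add: powr_realpow)
        then have "Q * Q powr \<omega> = real_of_int N powr (real d + real d * \<omega>)"
          by (simp add: powr_powr powr_add)
        moreover have "- w = 1 - (real d + real d * \<omega>)" unfolding w_def d_def by simp
        ultimately show ?thesis using Np by (simp only: powr_diff) simp
      qed
      have RN: "(R / real_of_int N) powr w \<le> 2 powr w"
        using NR N1 Rp w0 by (intro powr_mono2) (auto simp: field_simps)
      have "R powr w * min_linform \<alpha> R \<le> R powr w * (4 * real d * N * \<epsilon> / Q)"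
        using m_le dle by (intro mult_left_mono) auto
      also have "\<dots> = 4 * real d * \<delta> * (R powr w * (real_of_int N / (Q * Q powr \<omega>)))"
        unfolding \<epsilon>_def by (simp add: field_simps)
      also have "\<dots> = 4 * real d * \<delta> * (R / real_of_int N) powr w"
        unfolding pw using Rp Np by (simp add: powr_divide powr_minus_divide)
      also have "\<dots> \<le> 4 * real d * \<delta> * 2 powr w"
        using RN \<delta>0 by (intro mult_left_mono) auto
      also have "\<dots> < e"
      proof -
        have "4 * real d * \<delta> * 2 powr w = e * (C - 1) / C" unfolding \<delta>_def C_def by simp
        also have "\<dots> < e" using e0 C1 by (simp add: field_simps)
        finally show ?thesis .
      qed
      finally have "R powr w * min_linform \<alpha> R < e" .
      moreover have "R powr w * min_linform \<alpha> R \<ge> 0" using m0 by simp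
      ultimately show "dist (R powr w * min_linform \<alpha> R) 0 < e" by (simp add: dist_real_def)
    qed
  qed
  then show "\<alpha> \<in> E_set (real CARD('n) - 1 + real CARD('n) * \<omega>)"
    unfolding E_set_def w_def using K by simp
qed

end
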